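(* Let $r\ge1$ and $n\ge1$ be integers and let $\mathcal P(n,r,1)$ be the set of lattice paths with steps $(1,1)$ (up) and $(1,-r)$ (down) from $(0,0)$ to $((r+1)n+1,1)$ (so with $rn+1$ up steps and $n$ down steps). (1) For each $k=1,2,\dots,rn+1$, the number of paths in $\mathcal P(n,r,1)$ that start with an up step and have exactly $k$ up steps starting on or below the $x$-axis is $\frac{1}{rn+1}\binom{(r+1)n}{n}$. (2) For each $k=1,2,\dots,n$, the number of paths in $\mathcal P(n,r,1)$ that start with a down step and have exactly $k$ down steps starting on or below the $x$-axis is $\frac1n\binom{(r+1)n}{n-1}$. (3) For each $k=1,2,\dots,(r+1)n+1$, the number of paths in $\mathcal P(n,r,1)$ with exactly $k$ vertices on or below the $x$-axis is $\frac{1}{(r+1)n+1}\binom{(r+1)n+1}{n}$.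
   Context: A step starts on or below the $x$-axis if its initial vertex has $y$-coordinate $\le0$; a vertex is on or below the $x$-axis if its $y$-coordinate is $\le0$ (the final vertex, at height $1$, is never counted). *)

theory Defs
  imports Complex_Main
begin

text \<open>A lattice path is a list of steps; True = up step (1,1), False = down step (1,-r).\<close>

definition step_val :: "nat \<Rightarrow> bool \<Rightarrow> int" where
  "step_val r b = (if b then 1 else - int r)"

text \<open>y-coordinate of the i-th vertex (vertex 0 = origin), i.e. the initial vertex of step i.\<close>
definition height :: "nat \<Rightarrow> bool list \<Rightarrow> nat \<Rightarrow> int" where
  "height r p i = sum_list (map (step_val r) (take i p))"

definition paths :: "nat \<Rightarrow> nat \<Rightarrow> bool list set" where
  "paths n r = {p. length p = (r+1)*n+1 \<and> height r p (length p) = 1}"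

definition ups_below :: "nat \<Rightarrow> bool list \<Rightarrow> nat" where
  "ups_below r p = card {i. i < length p \<and> p ! i \<and> height r p i \<le> 0}"

definition downs_below :: "nat \<Rightarrow> bool list \<Rightarrow> nat" where
  "downs_below r p = card {i. i < length p \<and> \<not> p ! i \<and> height r p i \<le> 0}"

text \<open>Vertices 0..length-1 (final vertex excluded) on or below the x-axis.\<close>
definition verts_below :: "nat \<Rightarrow> bool list \<Rightarrow> nat" where
  "verts_below r p = card {i. i < length p \<and> height r p i \<le> 0}"

end

theory Submission
  imports Defs
begin

definition cnt :: "nat \<Rightarrow> (bool \<Rightarrow> bool) \<Rightarrow> bool list \<Rightarrow> nat" where
 "cnt r S p = card {i. i < length p \<and> S (p!i) \<and> height r p i \<le> 0}"

lemma height_sum: "i \<le> length p \<Longrightarrow> height r p i = (\<Sum>k<i. step_val r (p!k))"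
  unfolding height_def by (simp add: sum_list_sum_nth atLeast0LessThan min_def)


lemma sum_shift: "(\<Sum>k<i. (g::nat\<Rightarrow>int) (j+k)) = (\<Sum>k<j+i. g k) - (\<Sum>k<j. g k)"
  by (induction i) (auto simp: algebra_simps)


lemma mod2: "j < L \<Longrightarrow> i < (L::nat) \<Longrightarrow> (j+i) mod L = (if j+i<L then j+i else j+i-L)"
  using le_mod_geq[of L "j+i"] by auto

lemma rot_card:
  assumes "0 < (L::nat)" "j < L"
  shows "card {i. i<L \<and> Q((j+i) mod L)} = card {m. m<L \<and> Q m}"
proof -
  let ?f = "\<lambda>i. (j+i) mod L"
  have inj: "inj_on ?f {..<L}"
    unfolding inj_on_def using assms(2) by (auto simp: mod2 split: if_splits)
  have "?f ` {..<L} \<subseteq> {..<L}" using assms by auto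
  hence surj: "?f ` {..<L} = {..<L}" using endo_inj_surj[OF _ _ inj] by auto
  have "{m. m<L \<and> Q m} = ?f ` {i. i<L \<and> Q((j+i) mod L)}"
  proof
    show "{m. m<L \<and> Q m} \<subseteq> ?f ` {i. i<L \<and> Q((j+i) mod L)}"
    proof
      fix m assume m: "m \<in> {m. m<L \<and> Q m}"
      then have "m \<in> ?f ` {..<L}" using surj by simp
      then obtain i where "i < L" "m = ?f i" by auto
      thus "m \<in> ?f ` {i. i<L \<and> Q((j+i) mod L)}" using m by auto
    qed
  qed (use assms in auto)
  moreover have "inj_on ?f {i. i<L \<and> Q((j+i) mod L)}"
    by (rule inj_on_subset[OF inj]) auto
  ultimately show ?thesis by (simp add: card_image)
qed


lemma rank_unique:
  fixes key :: "nat \<Rightarrow> int" and T :: "nat set"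
  defines "prec \<equiv> \<lambda>m j. key m < key j \<or> (key m = key j \<and> j \<le> m)"
  assumes fin: "finite T" and k: "1 \<le> k" "k \<le> card T"
  shows "\<exists>!j. j \<in> T \<and> card {m\<in>T. prec m j} = k"
proof -
  define rk where "rk j = card {m\<in>T. prec m j}" for j
  have lt: "rk j < rk j'" if "j \<in> T" "j' \<in> T" "prec j j'" "j \<noteq> j'" for j j'
  proof -
    have "{m\<in>T. prec m j} \<subset> {m\<in>T. prec m j'}"
    proof
      show "{m\<in>T. prec m j} \<subseteq> {m\<in>T. prec m j'}"
        using that unfolding prec_def by auto
      have "j' \<notin> {m\<in>T. prec m j}" using that unfolding prec_def by auto
      moreover have "j' \<in> {m\<in>T. prec m j'}" using that unfolding prec_def by auto
      ultimately show "{m\<in>T. prec m j} \<noteq> {m\<in>T. prec m j'}" by blast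
    qed
    thus ?thesis unfolding rk_def by (intro psubset_card_mono) (use fin in auto)
  qed
  have tot: "prec j j' \<or> prec j' j" for j j' unfolding prec_def by auto
  have inj: "inj_on rk T"
    unfolding inj_on_def using lt tot by (metis less_irrefl)
  have sub: "rk ` T \<subseteq> {1..card T}"
  proof
    fix x assume "x \<in> rk ` T"
    then obtain j where j: "j \<in> T" "x = rk j" by auto
    have "j \<in> {m\<in>T. prec m j}" using j unfolding prec_def by auto
    hence "1 \<le> rk j" unfolding rk_def using fin
      by (metis (no_types, lifting) One_nat_def Suc_leI card_gt_0_iff empty_iff finite_subset mem_Collect_eq subsetI)
    moreover have "rk j \<le> card T" unfolding rk_def by (rule card_mono[OF fin]) auto
    ultimately show "x \<in> {1..card T}" using j by auto
  qed
  have "card (rk ` T) = card {1..card T}" using card_image[OF inj] by simp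
  hence eq: "rk ` T = {1..card T}" using sub by (intro card_subset_eq) auto
  then obtain j where "j \<in> T" "rk j = k" using k by (metis atLeastAtMost_iff imageE)
  have "\<exists>!j. j \<in> T \<and> rk j = k"
  proof (rule ex1I[of _ j])
    show "j \<in> T \<and> rk j = k" using \<open>j \<in> T\<close> \<open>rk j = k\<close> by simp
  next
    fix j' assume "j' \<in> T \<and> rk j' = k"
    thus "j' = j" using inj_onD[OF inj, of j' j] \<open>j \<in> T\<close> \<open>rk j = k\<close> by simp
  qed
  thus ?thesis unfolding rk_def .
qed



lemma cnt_rot:
  assumes len: "length p = L" and L: "0 < L" and h1: "height r p L = 1" and j: "j < L"
  shows "cnt r S (rotate j p) = card {m. m<L \<and> S(p!m) \<and> (height r p m < height r p j \<or> (height r p m = height r p j \<and> j \<le> m))}"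
proof -
  define G where "G m = step_val r (p ! (m mod L))" for m
  define H where "H m = (\<Sum>k<m. G k)" for m
  have H_eq: "H m = height r p m" if "m \<le> L" for m
    unfolding H_def G_def using that len by (simp add: height_sum)
  have H_per: "H (m+L) = H m + 1" for m
  proof (induction m)
    case 0 then show ?case using H_eq h1 by (simp add: height_def)
  next
    case (Suc m)
    have "G (m+L) = G m" unfolding G_def by simp
    then show ?case using Suc by (simp add: H_def)
  qed
  have rot_h: "height r (rotate j p) i = H(j+i) - H j" if "i \<le> L" for i
  proof -
    have "height r (rotate j p) i = (\<Sum>k<i. step_val r (rotate j p ! k))"
      using that len by (simp add: height_sum)
    also have "\<dots> = (\<Sum>k<i. G (j+k))"
      using that len by (intro sum.cong) (auto simp: G_def nth_rotate)
    also have "\<dots> = H(j+i) - H j" unfolding H_def by (rule sum_shift)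
    finally show ?thesis .
  qed
  define Q where "Q m = (S(p!m) \<and> (H m < H j \<or> (H m = H j \<and> j \<le> m)))" for m
  have "{i. i < length (rotate j p) \<and> S (rotate j p ! i) \<and> height r (rotate j p) i \<le> 0}
        = {i. i<L \<and> Q((j+i) mod L)}"
  proof (rule Collect_cong)
    fix i
    show "(i < length (rotate j p) \<and> S (rotate j p ! i) \<and> height r (rotate j p) i \<le> 0) =
          (i < L \<and> Q ((j + i) mod L))"
    proof (cases "i < L")
      case True
      have nth: "rotate j p ! i = p ! ((j+i) mod L)" using True len by (simp add: nth_rotate)
      show ?thesis
      proof (cases "j + i < L")
        case True2: True
        then show ?thesis using True nth len rot_h[of i] unfolding Q_def by auto
      next
        case False
        define m where "m = j + i - L"
        have m: "j + i = m + L" "m < j" "(j+i) mod L = m" using False True j unfolding m_def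
          using mod2[OF j True] by auto
        show ?thesis using True nth len rot_h[of i] m H_per[of m] unfolding Q_def by auto
      qed
    qed (use len in auto)
  qed
  hence "cnt r S (rotate j p) = card {i. i<L \<and> Q((j+i) mod L)}" unfolding cnt_def by simp
  also have "\<dots> = card {m. m<L \<and> Q m}" by (rule rot_card[OF L j])
  also have "{m. m<L \<and> Q m} = {m. m<L \<and> S(p!m) \<and> (height r p m < height r p j \<or> (height r p m = height r p j \<and> j \<le> m))}"
    unfolding Q_def using H_eq j by auto
  finally show ?thesis .
qed



lemma card_split:
  "card {i. i<length p \<and> p!i} = length p - card {i. i<length p \<and> \<not> p!i}"
  "card {i. i<length p \<and> \<not> p!i} \<le> length p"
proof -
  have e: "{i. i<length p \<and> p!i} = {..<length p} - {i. i<length p \<and> \<not> p!i}" by auto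
  show "card {i. i<length p \<and> p!i} = length p - card {i. i<length p \<and> \<not> p!i}"
    unfolding e by (subst card_Diff_subset) auto
  show "card {i. i<length p \<and> \<not> p!i} \<le> length p"
    using card_mono[of "{..<length p}" "{i. i<length p \<and> \<not> p!i}"] by auto
qed

lemma height_full:
  "height r p (length p) = int (card {i. i<length p \<and> p!i}) - int r * int (card {i. i<length p \<and> \<not> p!i})"
proof -
  have "height r p (length p) = (\<Sum>k<length p. step_val r (p!k))" by (simp add: height_sum)
  also have "\<dots> = (\<Sum>k\<in>{i. i<length p \<and> p!i}. 1) + (\<Sum>k\<in>{i. i<length p \<and> \<not> p!i}. - int r)"
    unfolding step_val_def sum.If_cases[OF finite_lessThan]
    by (intro arg_cong2[where f="(+)"] sum.cong) auto
  finally show ?thesis by simp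
qed

lemma paths_iff:
  "p \<in> paths n r \<longleftrightarrow> length p = (r+1)*n+1 \<and> card {i. i<length p \<and> \<not> p!i} = n"
proof -
  define d where "d = card {i. i<length p \<and> \<not> p!i}"
  have dle: "d \<le> length p" unfolding d_def by (rule card_split(2))
  have h: "height r p (length p) = int (length p) - int d - int r * int d"
    using height_full[of r p] card_split(1)[of p] dle unfolding d_def[symmetric] by simp
  show ?thesis unfolding d_def[symmetric]
  proof
    assume "p \<in> paths n r"
    hence len: "length p = (r+1)*n+1" and "height r p (length p) = 1" unfolding paths_def by auto
    hence "int ((r+1)*n+1) - int d - int r * int d = 1" using h by simp
    hence "int (r+1) * int n = int (r+1) * int d" by (simp add: algebra_simps)
    hence "n = d" by simp
    thus "length p = (r+1)*n+1 \<and> d = n" using len by simp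
  next
    assume a: "length p = (r+1)*n+1 \<and> d = n"
    hence "height r p (length p) = int ((r+1)*n+1) - int n - int r * int n" using h by simp
    also have "\<dots> = 1" by (simp add: algebra_simps)
    finally show "p \<in> paths n r" using a unfolding paths_def by simp
  qed
qed

lemma card_paths: "card (paths n r) = ((r+1)*n+1) choose n"
proof -
  define L where "L = (r+1)*n+1"
  let ?A = "{B. B \<subseteq> {..<L} \<and> card B = n}"
  have "bij_betw (\<lambda>p. {i. i<L \<and> \<not> p!i}) (paths n r) ?A"
  proof (rule bij_betw_byWitness[where f'="\<lambda>B. map (\<lambda>i. i \<notin> B) [0..<L]"])
    show "\<forall>p\<in>paths n r. map (\<lambda>i. i \<notin> {i. i < L \<and> \<not> p ! i}) [0..<L] = p"
    proof
      fix p assume "p \<in> paths n r"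
      hence len: "length p = L" unfolding paths_iff L_def by simp
      show "map (\<lambda>i. i \<notin> {i. i < L \<and> \<not> p ! i}) [0..<L] = p"
        by (rule nth_equalityI) (use len in auto)
    qed
    show "\<forall>B\<in>?A. {i. i < L \<and> \<not> map (\<lambda>i. i \<notin> B) [0..<L] ! i} = B" by auto
    show "(\<lambda>p. {i. i < L \<and> \<not> p ! i}) ` paths n r \<subseteq> ?A"
    proof (rule image_subsetI)
      fix p assume "p \<in> paths n r"
      hence "length p = L" "card {i. i<length p \<and> \<not> p!i} = n" unfolding paths_iff L_def by auto
      thus "{i. i < L \<and> \<not> p ! i} \<in> ?A" by auto
    qed
    show "(\<lambda>B. map (\<lambda>i. i \<notin> B) [0..<L]) ` ?A \<subseteq> paths n r"
    proof
      fix q assume "q \<in> (\<lambda>B. map (\<lambda>i. i \<notin> B) [0..<L]) ` ?A"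
      then obtain B where B: "B \<subseteq> {..<L}" "card B = n" "q = map (\<lambda>i. i \<notin> B) [0..<L]" by auto
      have "{i. i < length q \<and> \<not> q ! i} = B" using B by auto
      thus "q \<in> paths n r" unfolding paths_iff using B L_def by simp
    qed
  qed
  hence "card (paths n r) = card ?A" by (rule bij_betw_same_card)
  also have "\<dots> = L choose n" using n_subsets[of "{..<L}" n] by simp
  finally show ?thesis unfolding L_def .
qed


lemma rotate_paths: "p \<in> paths n r \<Longrightarrow> rotate j p \<in> paths n r"
proof -
  assume p: "p \<in> paths n r"
  define k where "k = j mod length p"
  have "sum_list (map (step_val r) (rotate j p)) = sum_list (map (step_val r) p)"
    unfolding rotate_drop_take k_def[symmetric]
    by (metis append_take_drop_id map_append sum_list_append add.commute)
  thus ?thesis using p unfolding paths_def height_def by simp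
qed

lemma dc:
  assumes L: "L = (r+1)*n+1"
    and N: "\<forall>p\<in>paths n r. card {m. m<L \<and> S(p!m)} = N" and k: "1 \<le> k" "k \<le> N"
  shows "card {q\<in>paths n r. S(q!0) \<and> cnt r S q = k} * L = card (paths n r)"
proof -
  let ?P = "paths n r"
  let ?Q = "{q\<in>paths n r. S(q!0) \<and> cnt r S q = k}"
  have Lpos: "0 < L" using L by simp
  have lenP: "length p = L" if "p \<in> ?P" for p using that L unfolding paths_def by simp
  have finP: "finite ?P"
    by (rule finite_subset[OF _ finite_lists_length_eq[of "UNIV::bool set" L]]) (auto simp: lenP)
  define A where "A p = {j. j<L \<and> S(p!j) \<and> cnt r S (rotate j p) = k}" for p
  have cardA: "card (A p) = 1" if p: "p \<in> ?P" for p
  proof -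
    define T where "T = {m. m<L \<and> S(p!m)}"
    have h1: "height r p L = 1" using p lenP[OF p] unfolding paths_def by auto
    have A_eq: "A p = {j. j \<in> T \<and> card {m\<in>T. height r p m < height r p j \<or> (height r p m = height r p j \<and> j \<le> m)} = k}"
    proof -
      have "cnt r S (rotate j p) = card {m\<in>T. height r p m < height r p j \<or> (height r p m = height r p j \<and> j \<le> m)}"
        if "j < L" for j
        using cnt_rot[OF lenP[OF p] Lpos h1 that, of S] unfolding T_def
        by (simp add: conj_assoc)
      thus ?thesis unfolding A_def T_def by auto
    qed
    have "finite T" unfolding T_def by simp
    moreover have "card T = N" using N p unfolding T_def by simp
    ultimately have "\<exists>!j. j \<in> T \<and> card {m\<in>T. height r p m < height r p j \<or> (height r p m = height r p j \<and> j \<le> m)} = k"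
      using k by (intro rank_unique) auto
    then obtain j0 where "j0 \<in> T \<and> card {m\<in>T. height r p m < height r p j0 \<or> (height r p m = height r p j0 \<and> j0 \<le> m)} = k"
      "\<forall>y. y \<in> T \<and> card {m\<in>T. height r p m < height r p y \<or> (height r p m = height r p y \<and> y \<le> m)} = k \<longrightarrow> y = j0"
      by (elim ex1E) blast
    hence "A p = {j0}" unfolding A_eq by blast
    thus ?thesis by simp
  qed
  have "card (Sigma ?P A) = (\<Sum>p\<in>?P. card (A p))"
    using finP by (intro card_SigmaI) (auto simp: A_def)
  also have "\<dots> = card ?P" using cardA by simp
  finally have cX: "card (Sigma ?P A) = card ?P" .
  have "bij_betw (\<lambda>(p,j). (rotate j p, j)) (Sigma ?P A) (?Q \<times> {..<L})"
  proof (rule bij_betw_byWitness[where f'="\<lambda>(q,j). (rotate (L-j) q, j)"])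
    show "\<forall>x\<in>Sigma ?P A. (\<lambda>(q,j). (rotate (L-j) q, j)) ((\<lambda>(p,j). (rotate j p, j)) x) = x"
    proof
      fix x assume "x \<in> Sigma ?P A"
      then obtain p j where x: "x = (p,j)" "p \<in> ?P" "j < L" unfolding A_def by auto
      have "rotate (L-j) (rotate j p) = p" using x lenP[OF x(2)] by (simp add: rotate_rotate)
      thus "(\<lambda>(q,j). (rotate (L-j) q, j)) ((\<lambda>(p,j). (rotate j p, j)) x) = x" using x by simp
    qed
    show "\<forall>y\<in>?Q \<times> {..<L}. (\<lambda>(p,j). (rotate j p, j)) ((\<lambda>(q,j). (rotate (L-j) q, j)) y) = y"
    proof
      fix y assume "y \<in> ?Q \<times> {..<L}"
      then obtain q j where y: "y = (q,j)" "q \<in> ?P" "j < L" by auto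
      have "rotate j (rotate (L-j) q) = q" using y lenP[OF y(2)] by (simp add: rotate_rotate)
      thus "(\<lambda>(p,j). (rotate j p, j)) ((\<lambda>(q,j). (rotate (L-j) q, j)) y) = y" using y by simp
    qed
    show "(\<lambda>(p,j). (rotate j p, j)) ` Sigma ?P A \<subseteq> ?Q \<times> {..<L}"
    proof
      fix z assume "z \<in> (\<lambda>(p,j). (rotate j p, j)) ` Sigma ?P A"
      then obtain p j where z: "z = (rotate j p, j)" "p \<in> ?P" "j \<in> A p" by auto
      have "rotate j p ! 0 = p ! j" using z lenP[OF z(2)] Lpos unfolding A_def by (simp add: nth_rotate)
      thus "z \<in> ?Q \<times> {..<L}" using z rotate_paths[OF z(2)] unfolding A_def by auto
    qed
    show "(\<lambda>(q,j). (rotate (L-j) q, j)) ` (?Q \<times> {..<L}) \<subseteq> Sigma ?P A"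
    proof
      fix z assume "z \<in> (\<lambda>(q,j). (rotate (L-j) q, j)) ` (?Q \<times> {..<L})"
      then obtain q j where z: "z = (rotate (L-j) q, j)" "q \<in> ?Q" "j < L" by auto
      have qP: "q \<in> ?P" using z by simp
      have "rotate (L-j) q ! j = q ! 0" using z lenP[OF qP] by (simp add: nth_rotate)
      moreover have "rotate j (rotate (L-j) q) = q" using z lenP[OF qP] by (simp add: rotate_rotate)
      ultimately show "z \<in> Sigma ?P A" using z rotate_paths[OF qP] unfolding A_def by auto
    qed
  qed
  hence "card (Sigma ?P A) = card (?Q \<times> {..<L})" by (rule bij_betw_same_card)
  thus ?thesis using cX by (simp add: card_cartesian_product)
qed


lemma div_lem: "(a::real) * b = c \<Longrightarrow> b \<noteq> 0 \<Longrightarrow> a = 1/b * c"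
  by (simp add: field_simps)

lemma nat_real_lem: "(a::nat) * b = c \<Longrightarrow> real a * real b = real c"
  by (drule arg_cong[where f=real]) simp

theorem theorem13:
  fixes n r :: nat
  assumes "r \<ge> 1" and "n \<ge> 1"
  shows "(\<forall>k. 1 \<le> k \<and> k \<le> r*n+1 \<longrightarrow>
            real (card {p \<in> paths n r. p \<noteq> [] \<and> hd p \<and> ups_below r p = k})
              = 1 / real (r*n+1) * real (((r+1)*n) choose n))
       \<and> (\<forall>k. 1 \<le> k \<and> k \<le> n \<longrightarrow>
            real (card {p \<in> paths n r. p \<noteq> [] \<and> \<not> hd p \<and> downs_below r p = k})
              = 1 / real n * real (((r+1)*n) choose (n-1)))
       \<and> (\<forall>k. 1 \<le> k \<and> k \<le> (r+1)*n+1 \<longrightarrow>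
            real (card {p \<in> paths n r. verts_below r p = k})
              = 1 / real ((r+1)*n+1) * real (((r+1)*n+1) choose n))"
proof -
  define L where "L = (r+1)*n+1"
  have Lpos: "0 < L" unfolding L_def by simp
  have cP: "card (paths n r) = L choose n" unfolding L_def by (rule card_paths)
  have lenP: "length p = L" if "p \<in> paths n r" for p using that unfolding paths_iff L_def by simp
  have cD: "card {m. m<L \<and> \<not> p!m} = n" if "p \<in> paths n r" for p
    using that lenP[OF that] unfolding paths_iff by auto
  have cU: "card {m. m<L \<and> p!m} = r*n+1" if "p \<in> paths n r" for p
    using card_split(1)[of p] cD[OF that] lenP[OF that] unfolding L_def by simp
  have ne: "p \<noteq> []" if "p \<in> paths n r" for p using lenP[OF that] Lpos by auto
  have part1: "real (card {p \<in> paths n r. p \<noteq> [] \<and> hd p \<and> ups_below r p = k})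
              = 1 / real (r*n+1) * real (((r+1)*n) choose n)" if k: "1 \<le> k" "k \<le> r*n+1" for k
  proof -
    let ?c = "card {p \<in> paths n r. p \<noteq> [] \<and> hd p \<and> ups_below r p = k}"
    have seq: "{p \<in> paths n r. p \<noteq> [] \<and> hd p \<and> ups_below r p = k} = {q\<in>paths n r. (\<lambda>b. b) (q!0) \<and> cnt r (\<lambda>b. b) q = k}"
      using ne by (auto simp: ups_below_def cnt_def hd_conv_nth)
    have "?c * L = L choose n"
      unfolding seq cP[symmetric] using cU k by (intro dc[OF L_def]) auto
    hence "?c * (r*n+1) * L = (r*n+1) * (L choose n)" by (simp add: algebra_simps)
    also have "\<dots> = (L - n) * (L choose n)" unfolding L_def by simp
    also have "\<dots> = L * ((L-1) choose n)" by (rule binomial_absorb_comp)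
    finally have e: "?c * (r*n+1) * L = L * ((L-1) choose n)" .
    have "L - 1 = (r+1)*n" unfolding L_def by simp
    hence "(?c * (r*n+1)) * L = (((r+1)*n) choose n) * L" using e by (simp only: mult.commute)
    hence "?c * (r*n+1) = ((r+1)*n) choose n" using Lpos by (simp only: mult_right_cancel[of L] neq0_conv)
    hence "real ?c * real (r*n+1) = real (((r+1)*n) choose n)" by (rule nat_real_lem)
    thus ?thesis by (rule div_lem) (metis add_eq_0_iff_both_eq_0 of_nat_eq_0_iff one_neq_zero)
  qed
  have part2: "real (card {p \<in> paths n r. p \<noteq> [] \<and> \<not> hd p \<and> downs_below r p = k})
              = 1 / real n * real (((r+1)*n) choose (n-1))" if k: "1 \<le> k" "k \<le> n" for k
  proof -
    let ?c = "card {p \<in> paths n r. p \<noteq> [] \<and> \<not> hd p \<and> downs_below r p = k}"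
    have seq: "{p \<in> paths n r. p \<noteq> [] \<and> \<not> hd p \<and> downs_below r p = k} = {q\<in>paths n r. Not (q!0) \<and> cnt r Not q = k}"
      using ne by (auto simp: downs_below_def cnt_def hd_conv_nth)
    have "?c * L = L choose n"
      unfolding seq cP[symmetric] using cD k by (intro dc[OF L_def]) auto
    hence "?c * n * L = n * (L choose n)" by (simp add: algebra_simps)
    also have "\<dots> = Suc (n-1) * (L choose Suc (n-1))" using assms(2) by simp
    also have "\<dots> = L * ((L-1) choose (n-1))" by (rule binomial_absorption)
    finally have e: "?c * n * L = L * ((L-1) choose (n-1))" .
    have "L - 1 = (r+1)*n" unfolding L_def by simp
    hence "(?c * n) * L = (((r+1)*n) choose (n-1)) * L" using e by (simp only: mult.commute)
    hence "?c * n = ((r+1)*n) choose (n-1)" using Lpos by (simp only: mult_right_cancel[of L] neq0_conv)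
    hence "real ?c * real n = real (((r+1)*n) choose (n-1))" by (rule nat_real_lem)
    thus ?thesis by (rule div_lem) (use assms(2) in simp)
  qed
  have part3: "real (card {p \<in> paths n r. verts_below r p = k})
              = 1 / real ((r+1)*n+1) * real (((r+1)*n+1) choose n)" if k: "1 \<le> k" "k \<le> (r+1)*n+1" for k
  proof -
    let ?c = "card {p \<in> paths n r. verts_below r p = k}"
    have seq: "{p \<in> paths n r. verts_below r p = k} = {q\<in>paths n r. (\<lambda>_. True) (q!0) \<and> cnt r (\<lambda>_. True) q = k}"
      by (auto simp: verts_below_def cnt_def)
    have "\<forall>p\<in>paths n r. card {m. m<L \<and> (\<lambda>_. True) (p!m)} = L" by simp
    hence "?c * L = L choose n"
      unfolding seq cP[symmetric] using k unfolding L_def by (intro dc) auto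
    hence "real ?c * real L = real (L choose n)" by (rule nat_real_lem)
    thus ?thesis unfolding L_def[symmetric] by (rule div_lem) (use Lpos in simp)
  qed
  show ?thesis using part1 part2 part3 by blast
qed

end
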